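(* Let $I$ be a countable index set and let $\mathbf X=(X_i)_{i\in I}$ be a family of random elements, defined on a common probability space, taking values in a POP space $(\mathbb X,\preceq)$. Assume that for every finite $J\subset I$ the finite subfamily $X_J=(X_i)_{i\in J}$ is negatively associated. Then $\mathbf X$ is negatively associated. Likewise, if $X_J$ is positively associated for every finite $J\subset I$, then $\mathbf X$ is positively associated.
   Context: A POP space is a Polish space $\mathbb X$ with Borel $\sigma$-field $\mathcal X$, equipped with a partial order $\preceq$ that is closed, i.e. $\{(x,x'):x\preceq x'\}$ is closed in $\mathbb X^2$. For $J\subset I$ write $X_J=(X_i)_{i\in J}$, a random element of $\mathbb X^J$ (product topology and product Borel $\sigma$-field). $\mathbb X^J$ is ordered coordinatewise, and a function $f:\mathbb X^J\to\mathbb R$ is non-decreasing if $x\preceq y$ coordinatewise implies $f(x)\le f(y)$. A family $\mathbf X=(X_i)_{i\in I}$ is negatively associated (NA) if $\mathbb E[f(X_J)g(X_{I\setminus J})]\le \mathbb E[f(X_J)]\,\mathbb E[g(X_{I\setminus J})]$ for all $J\subset I$ and all bounded measurable non-decreasing $f:\mathbb X^J\to\mathbb R$, $g:\mathbb X^{I\setminus J}\to\mathbb R$. It is positively associated (PA) if $\mathbb E[f(X_J)g(X_J)]\ge \mathbb E[f(X_J)]\,\mathbb E[g(X_J)]$ for all $J\subset I$ and all bounded measurable non-decreasing $f,g:\mathbb X^J\to\mathbb R$. *)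

theory Defs
  imports "HOL-Probability.Probability"
begin

text \<open>A POP space: the ambient type is Polish (type class polish_space) and
  le is a partial order on it whose graph is closed in the product topology.\<close>
definition pop_order :: "('a::polish_space \<Rightarrow> 'a \<Rightarrow> bool) \<Rightarrow> bool" where
  "pop_order le \<longleftrightarrow>
     (\<forall>x. le x x) \<and> (\<forall>x y. le x y \<and> le y x \<longrightarrow> x = y) \<and>
     (\<forall>x y z. le x y \<and> le y z \<longrightarrow> le x z) \<and>
     closed {(x, y). le x y}"

definition bdd_mono_fun ::
  "('a \<Rightarrow> 'a \<Rightarrow> bool) \<Rightarrow> 'i set \<Rightarrow> (('i \<Rightarrow> 'a::topological_space) \<Rightarrow> real) \<Rightarrow> bool" where
  "bdd_mono_fun le J f \<longleftrightarrow>
     f \<in> borel_measurable (PiM J (\<lambda>_. borel)) \<and>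
     (\<exists>B. \<forall>x\<in>space (PiM J (\<lambda>_. borel)). \<bar>f x\<bar> \<le> B) \<and>
     (\<forall>x\<in>space (PiM J (\<lambda>_. borel)). \<forall>y\<in>space (PiM J (\<lambda>_. borel)).
        (\<forall>i\<in>J. le (x i) (y i)) \<longrightarrow> f x \<le> f y)"

definition subfam :: "('i \<Rightarrow> 'w \<Rightarrow> 'a) \<Rightarrow> 'i set \<Rightarrow> 'w \<Rightarrow> ('i \<Rightarrow> 'a)" where
  "subfam X J = (\<lambda>\<omega>. restrict (\<lambda>i. X i \<omega>) J)"

definition neg_assoc ::
  "'w measure \<Rightarrow> ('a \<Rightarrow> 'a \<Rightarrow> bool) \<Rightarrow> ('i \<Rightarrow> 'w \<Rightarrow> 'a::topological_space) \<Rightarrow> 'i set \<Rightarrow> bool" where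
  "neg_assoc M le X I \<longleftrightarrow>
     (\<forall>J f g. J \<subseteq> I \<and> bdd_mono_fun le J f \<and> bdd_mono_fun le (I - J) g \<longrightarrow>
        (\<integral>\<omega>. f (subfam X J \<omega>) * g (subfam X (I - J) \<omega>) \<partial>M)
          \<le> (\<integral>\<omega>. f (subfam X J \<omega>) \<partial>M) * (\<integral>\<omega>. g (subfam X (I - J) \<omega>) \<partial>M))"

definition pos_assoc ::
  "'w measure \<Rightarrow> ('a \<Rightarrow> 'a \<Rightarrow> bool) \<Rightarrow> ('i \<Rightarrow> 'w \<Rightarrow> 'a::topological_space) \<Rightarrow> 'i set \<Rightarrow> bool" where
  "pos_assoc M le X I \<longleftrightarrow>
     (\<forall>J f g. J \<subseteq> I \<and> bdd_mono_fun le J f \<and> bdd_mono_fun le J g \<longrightarrow>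
        (\<integral>\<omega>. f (subfam X J \<omega>) * g (subfam X J \<omega>) \<partial>M)
          \<ge> (\<integral>\<omega>. f (subfam X J \<omega>) \<partial>M) * (\<integral>\<omega>. g (subfam X J \<omega>) \<partial>M))"

end

theory Submission
  imports Defs
begin


lemma isCont_eval: "isCont (\<lambda>x::nat\<Rightarrow>'c::polish_space. x m) y"
  using continuous_on_product_coordinates[of m] continuous_on_eq_continuous_at[of UNIV] by blast

lemma compact_seq_lemma:
  fixes K :: "(nat \<Rightarrow> 'a::polish_space) set" and L :: "('a \<times> 'a) set"
  assumes "compact K" "closed L" "\<forall>j. k j \<in> K" "z \<longlonglongrightarrow> z0"
    "\<forall>m\<in>S. \<exists>N. \<forall>j\<ge>N. (k j m, z j m) \<in> L"
  shows "\<exists>k0\<in>K. \<forall>m\<in>S. (k0 m, z0 m) \<in> L"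
proof -
  obtain k0 r where
    k0: "k0\<in>K" "strict_mono r" "(k \<circ> r) \<longlonglongrightarrow> k0"
    using seq_compactE[OF compact_imp_seq_compact[OF assms(1)] assms(3)] by blast
  have "(k0 m, z0 m) \<in> L" if mS: "m \<in> S" for m
  proof -
    have t1: "(\<lambda>j. (k \<circ> r) j m) \<longlonglongrightarrow> k0 m"
      by (rule isCont_tendsto_compose[OF isCont_eval k0(3)])
    have z': "(z \<circ> r) \<longlonglongrightarrow> z0" using LIMSEQ_subseq_LIMSEQ[OF assms(4) k0(2)] .
    have t2: "(\<lambda>j. (z \<circ> r) j m) \<longlonglongrightarrow> z0 m"
      by (rule isCont_tendsto_compose[OF isCont_eval z'])
    have t: "(\<lambda>j. (k (r j) m, z (r j) m)) \<longlonglongrightarrow> (k0 m, z0 m)"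
      using tendsto_Pair[OF t1 t2] unfolding o_def .
    obtain N where N: "\<forall>j\<ge>N. (k j m, z j m) \<in> L" using bspec[OF assms(5) mS] by (elim exE)
    have ev: "eventually (\<lambda>j. (k (r j) m, z (r j) m) \<in> L) sequentially"
      unfolding eventually_sequentially
    proof (intro exI allI impI)
      fix j assume "N \<le> j"
      then have "N \<le> r j" using seq_suble[OF k0(2), of j] by linarith
      then show "(k (r j) m, z (r j) m) \<in> L" using N by simp
    qed
    show ?thesis using Lim_in_closed_set[OF assms(2) ev trivial_limit_sequentially t] .
  qed
  then show ?thesis using k0(1) by (intro bexI[of _ k0]) simp_all
qed

lemma C_closed:
  fixes K :: "(nat \<Rightarrow> 'a::polish_space) set" and L :: "('a \<times> 'a) set"
  assumes "compact K" "closed L"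
  shows "closed {z. \<exists>k\<in>K. \<forall>m<n. (k m, z m) \<in> L}"
  unfolding closed_sequential_limits
proof (intro allI impI, elim conjE)
  fix x l assume x: "\<forall>j. x j \<in> {z. \<exists>k\<in>K. \<forall>m<n. (k m, z m) \<in> L}" and l: "x \<longlonglongrightarrow> l"
  then have "\<forall>j. \<exists>k. k \<in> K \<and> (\<forall>m<n. (k m, x j m) \<in> L)" by blast
  then obtain k where k: "\<And>j. k j \<in> K" "\<And>j m. m < n \<Longrightarrow> (k j m, x j m) \<in> L" by metis
  have "\<exists>k0\<in>K. \<forall>m\<in>{..<n}. (k0 m, l m) \<in> L"
    by (rule compact_seq_lemma[OF assms, where k=k and z=x]) (use k l in auto)
  then show "l \<in> {z. \<exists>k\<in>K. \<forall>m<n. (k m, z m) \<in> L}" by auto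
qed

lemma C_inter:
  fixes K :: "(nat \<Rightarrow> 'a::polish_space) set" and L :: "('a \<times> 'a) set"
  assumes "compact K" "closed L" "\<forall>n. \<exists>k\<in>K. \<forall>m<n. (k m, z m) \<in> L"
  shows "\<exists>k\<in>K. \<forall>m. (k m, z m) \<in> L"
proof -
  obtain k where k: "\<And>j. k j \<in> K" "\<And>j m. m < j \<Longrightarrow> (k j m, z m) \<in> L"
    using assms(3) by metis
  have "\<exists>k0\<in>K. \<forall>m\<in>UNIV. (k0 m, z m) \<in> L"
  proof (rule compact_seq_lemma[OF assms(1,2)])
    show "\<forall>j. k j \<in> K" using k by blast
    show "(\<lambda>j. z) \<longlonglongrightarrow> z" by simp
    show "\<forall>m\<in>UNIV. \<exists>N. \<forall>j\<ge>N. (k j m, z m) \<in> L"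
      using k(2) by (metis Suc_le_eq UNIV_I)
  qed
  then show ?thesis by auto
qed

lemma eval_borel: "(\<lambda>z::nat\<Rightarrow>'a::polish_space. z m) \<in> borel_measurable borel"
  by (rule borel_measurable_continuous_onI) simp

lemma approx_upper:
  fixes M :: "'w measure" and le :: "'a::polish_space \<Rightarrow> 'a \<Rightarrow> bool" and X :: "'i \<Rightarrow> 'w \<Rightarrow> 'a"
  assumes P: "prob_space M" and cl: "closed {(x,y). le x y}"
    and refl: "\<forall>x. le x x" and tr: "\<forall>x y z. le x y \<and> le y z \<longrightarrow> le x z"
    and J: "countable J" "J \<noteq> {}" and Xm: "\<And>i. i \<in> J \<Longrightarrow> X i \<in> borel_measurable M"
    and U: "U \<in> sets (PiM J (\<lambda>_. borel))"
    and up: "\<And>x y. x \<in> U \<Longrightarrow> y \<in> space (PiM J (\<lambda>_. borel)) \<Longrightarrow> (\<forall>i\<in>J. le (x i) (y i)) \<Longrightarrow> y \<in> U"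
    and eps: "\<epsilon> > 0"
  shows "\<exists>n0. \<forall>n\<ge>n0. \<exists>V \<in> sets (PiM (from_nat_into J ` {..<n}) (\<lambda>_. borel)).
     (\<forall>x y. x \<in> V \<longrightarrow> y \<in> space (PiM (from_nat_into J ` {..<n}) (\<lambda>_. borel)) \<longrightarrow>
        (\<forall>i\<in>from_nat_into J ` {..<n}. le (x i) (y i)) \<longrightarrow> y \<in> V) \<and>
     measure M {\<omega> \<in> space M. (subfam X J \<omega> \<in> U) \<noteq> (subfam X (from_nat_into J ` {..<n}) \<omega> \<in> V)} < \<epsilon>"
proof -
  interpret prob_space M by (rule P)
  define e where "e = from_nat_into J"
  have eJ: "\<And>n. e n \<in> J" unfolding e_def using J(2) by (rule from_nat_into)
  have einv: "\<And>i. i \<in> J \<Longrightarrow> e (to_nat_on J i) = i" unfolding e_def using J(1) by simp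
  define Z where "Z = (\<lambda>\<omega>. \<lambda>m. X (e m) \<omega>)"
  have Zm: "Z \<in> borel_measurable M" unfolding Z_def
    by (rule measurable_coordinatewise_then_product) (simp add: Xm eJ)
  define \<psi> where "\<psi> = (\<lambda>z::nat\<Rightarrow>'a. \<lambda>i\<in>J. z (to_nat_on J i))"
  have \<psi>m: "\<psi> \<in> measurable borel (PiM J (\<lambda>_. borel))" unfolding \<psi>_def
    by (rule measurable_restrict) (rule eval_borel)
  have sub: "\<And>\<omega>. subfam X J \<omega> = \<psi> (Z \<omega>)"
    unfolding subfam_def \<psi>_def Z_def by (auto simp: einv fun_eq_iff restrict_def)
  define W where "W = \<psi> -` U"
  have Wm: "W \<in> sets borel" using measurable_sets[OF \<psi>m U] by (simp add: W_def)
  have Wup: "z' \<in> W" if "z \<in> W" "\<forall>m. le (z m) (z' m)" for z z'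
  proof -
    have "\<psi> z' \<in> space (PiM J (\<lambda>_. borel))" unfolding \<psi>_def space_PiM by auto
    moreover have "\<forall>i\<in>J. le (\<psi> z i) (\<psi> z' i)" unfolding \<psi>_def using that(2) by simp
    ultimately show ?thesis using up that(1) unfolding W_def by blast
  qed
  define \<nu> where "\<nu> = distr M borel Z"
  interpret \<nu>: prob_space \<nu> unfolding \<nu>_def by (rule prob_space_distr[OF Zm])
  have sets\<nu>: "sets \<nu> = sets borel" unfolding \<nu>_def by simp
  have \<nu>meas: "\<And>A. A \<in> sets borel \<Longrightarrow> measure \<nu> A = measure M (Z -` A \<inter> space M)"
    unfolding \<nu>_def by (rule measure_distr[OF Zm])
  have e2: "\<epsilon>/2 > 0" using eps by simp
  obtain K where K: "compact K" "K \<subseteq> W" "measure \<nu> W < measure \<nu> K + \<epsilon>/2"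
  proof (cases "measure \<nu> W - \<epsilon>/2 < 0")
    case True
    then show ?thesis using that[of "{}"] by simp
  next
    case False
    have "emeasure \<nu> W = (SUP K \<in> {K. K \<subseteq> W \<and> compact K}. emeasure \<nu> K)"
      by (rule inner_regular[OF sets\<nu> _ Wm]) simp
    moreover have "ennreal (measure \<nu> W - \<epsilon>/2) < emeasure \<nu> W"
      using False e2 by (simp add: \<nu>.emeasure_eq_measure ennreal_lessI)
    ultimately obtain K where "K \<subseteq> W" "compact K" "ennreal (measure \<nu> W - \<epsilon>/2) < emeasure \<nu> K"
      by (auto simp: less_SUP_iff)
    then show ?thesis using that[of K] False
      by (simp add: \<nu>.emeasure_eq_measure ennreal_less_iff)
  qed
  have Kb: "K \<in> sets borel" using K(1) by (simp add: compact_imp_closed)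
  define C where "C = (\<lambda>n. {z. \<exists>k\<in>K. \<forall>m<n. (k m, z m) \<in> {(x,y). le x y}})"
  have Cb: "C n \<in> sets borel" for n unfolding C_def
    by (rule borel_closed, rule C_closed[OF K(1) cl])
  have Cdec: "decseq C" unfolding decseq_def
  proof (intro allI impI subsetI)
    fix m n z assume mn: "m \<le> n" and z: "z \<in> C n"
    then obtain k where "k \<in> K" "\<forall>j<n. le (k j) (z j)" unfolding C_def by auto
    moreover have "\<forall>j<m. le (k j) (z j)" using calculation(2) mn by simp
    ultimately show "z \<in> C m" unfolding C_def by auto
  qed
  have CW: "(\<Inter>n. C n) \<subseteq> W"
  proof
    fix z assume "z \<in> (\<Inter>n. C n)"
    then have "\<forall>n. \<exists>k\<in>K. \<forall>m<n. (k m, z m) \<in> {(x,y). le x y}" unfolding C_def by blast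
    from C_inter[OF K(1) cl this] obtain k where "k \<in> K" "\<forall>m. le (k m) (z m)" by auto
    then show "z \<in> W" using Wup K(2) by blast
  qed
  have KC: "K \<subseteq> (\<Inter>n. C n)" unfolding C_def using refl by auto
  have Cib: "(\<Inter>n. C n) \<in> sets borel" using Cb by auto
  have lim: "(\<lambda>n. measure \<nu> (C n)) \<longlonglongrightarrow> measure \<nu> (\<Inter>n. C n)"
    by (rule \<nu>.finite_Lim_measure_decseq) (use Cb Cdec sets\<nu> in auto)
  have "eventually (\<lambda>n. measure \<nu> (C n) < measure \<nu> (\<Inter>n. C n) + \<epsilon>/2) sequentially"
    by (rule order_tendstoD(2)[OF lim]) (use e2 in simp)
  then obtain n0 where n0: "\<And>n. n \<ge> n0 \<Longrightarrow> measure \<nu> (C n) < measure \<nu> (\<Inter>n. C n) + \<epsilon>/2"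
    unfolding eventually_sequentially by blast
  have mK: "measure \<nu> K \<le> measure \<nu> (\<Inter>n. C n)"
    by (rule \<nu>.finite_measure_mono[OF KC]) (use Cib sets\<nu> in simp)
  show ?thesis
  proof (intro exI allI impI)
    fix n assume "n0 \<le> n"
    define J' where "J' = e ` {..<n}"
    define V where "V = {y \<in> space (PiM J' (\<lambda>_. borel)). \<exists>k\<in>K. \<forall>m<n. le (k m) (y (e m))}"
    define G where "G = (\<lambda>y::'i\<Rightarrow>'a. \<lambda>m. if m < n then y (e m) else undefined)"
    have Gm: "G \<in> borel_measurable (PiM J' (\<lambda>_. borel))" unfolding G_def
      proof (rule measurable_coordinatewise_then_product)
      fix i
      show "(\<lambda>x. if i < n then x (e i) else undefined) \<in> borel_measurable (PiM J' (\<lambda>_. borel))"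
      proof (cases "i < n")
        case True
        then have "e i \<in> J'" unfolding J'_def by auto
        then show ?thesis using True measurable_component_singleton[of "e i" J' "\<lambda>_. borel"] by simp
      qed simp
    qed
    have VG: "V = G -` C n \<inter> space (PiM J' (\<lambda>_. borel))"
      unfolding V_def G_def C_def by auto
    have Vm: "V \<in> sets (PiM J' (\<lambda>_. borel))" unfolding VG
      using measurable_sets[OF Gm Cb] .
    have Vup: "\<forall>x y. x \<in> V \<longrightarrow> y \<in> space (PiM J' (\<lambda>_. borel)) \<longrightarrow>
        (\<forall>i\<in>J'. le (x i) (y i)) \<longrightarrow> y \<in> V"
    proof (intro allI impI)
      fix x y assume x: "x \<in> V" and y: "y \<in> space (PiM J' (\<lambda>_. borel))" and xy: "\<forall>i\<in>J'. le (x i) (y i)"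
      from x obtain k where k: "k \<in> K" "\<forall>m<n. le (k m) (x (e m))" unfolding V_def by blast
      have "\<forall>m<n. le (k m) (y (e m))" using k(2) xy tr unfolding J'_def by blast
      then show "y \<in> V" using y k(1) unfolding V_def by blast
    qed
    have evV: "subfam X J' \<omega> \<in> V \<longleftrightarrow> Z \<omega> \<in> C n" for \<omega>
    proof -
      have "subfam X J' \<omega> \<in> space (PiM J' (\<lambda>_. borel))" unfolding subfam_def space_PiM by auto
      moreover have "\<forall>m<n. subfam X J' \<omega> (e m) = X (e m) \<omega>" unfolding subfam_def J'_def by auto
      ultimately show ?thesis unfolding V_def C_def Z_def by auto
    qed
    have evU: "subfam X J \<omega> \<in> U \<longleftrightarrow> Z \<omega> \<in> W" for \<omega>
      unfolding W_def sub by simp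
    let ?E = "{\<omega> \<in> space M. (subfam X J \<omega> \<in> U) \<noteq> (subfam X J' \<omega> \<in> V)}"
    have Esub: "?E \<subseteq> (Z -` (W - (\<Inter>n. C n)) \<inter> space M) \<union> (Z -` (C n - (\<Inter>n. C n)) \<inter> space M)"
      unfolding evU evV using CW by blast
    have m1: "measure M (Z -` (W - (\<Inter>n. C n)) \<inter> space M) = measure \<nu> W - measure \<nu> (\<Inter>n. C n)"
      using \<nu>meas[of "W - (\<Inter>n. C n)"] \<nu>.finite_measure_Diff[of W "\<Inter>n. C n"] Wm Cib CW sets\<nu> by simp
    have m2: "measure M (Z -` (C n - (\<Inter>n. C n)) \<inter> space M) = measure \<nu> (C n) - measure \<nu> (\<Inter>n. C n)"
      using \<nu>meas[of "C n - (\<Inter>n. C n)"] \<nu>.finite_measure_Diff[of "C n" "\<Inter>n. C n"] Cb Cib sets\<nu> by auto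
    have "measure M ?E \<le> measure M ((Z -` (W - (\<Inter>n. C n)) \<inter> space M) \<union> (Z -` (C n - (\<Inter>n. C n)) \<inter> space M))"
      by (rule finite_measure_mono[OF Esub]) (use Zm Wm Cb Cib in auto)
    also have "\<dots> \<le> measure M (Z -` (W - (\<Inter>n. C n)) \<inter> space M) + measure M (Z -` (C n - (\<Inter>n. C n)) \<inter> space M)"
      by (rule measure_subadditive) (use Zm Wm Cb Cib in auto)
    also have "\<dots> < \<epsilon>" unfolding m1 m2 using K(3) mK n0[OF \<open>n0 \<le> n\<close>] by linarith
    finally have "measure M ?E < \<epsilon>" .
    then show "\<exists>V \<in> sets (PiM (from_nat_into J ` {..<n}) (\<lambda>_. borel)).
     (\<forall>x y. x \<in> V \<longrightarrow> y \<in> space (PiM (from_nat_into J ` {..<n}) (\<lambda>_. borel)) \<longrightarrow>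
        (\<forall>i\<in>from_nat_into J ` {..<n}. le (x i) (y i)) \<longrightarrow> y \<in> V) \<and>
     measure M {\<omega> \<in> space M. (subfam X J \<omega> \<in> U) \<noteq> (subfam X (from_nat_into J ` {..<n}) \<omega> \<in> V)} < \<epsilon>"
      using Vm Vup unfolding J'_def e_def by blast
  qed
qed



lemma count_approx:
  fixes \<delta> s :: real and N :: nat
  assumes d: "\<delta> > 0" and s0: "0 \<le> s" and sN: "s \<le> real N * \<delta>"
  shows "\<bar>s - \<delta> * (\<Sum>k\<in>{1..N}. if real k * \<delta> < s then 1 else 0)\<bar> \<le> \<delta>"
proof -
  define c where "c = \<lceil>s / \<delta>\<rceil>"
  have "0 \<le> s / \<delta>" using s0 d by simp
  then have c0: "0 \<le> c" unfolding c_def by linarith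
  have cN: "c \<le> int N" unfolding c_def using sN d by (simp add: ceiling_le_iff divide_le_eq mult.commute)
  have c1: "real_of_int c - 1 < s / \<delta>" "s / \<delta> \<le> real_of_int c" unfolding c_def
    by linarith+
  have iff: "real k * \<delta> < s \<longleftrightarrow> int k < c" for k
    unfolding c_def less_ceiling_iff using d by (simp add: pos_less_divide_eq)
  have "(\<Sum>k\<in>{1..N}. if real k * \<delta> < s then 1 else (0::real)) = (\<Sum>k\<in>{k\<in>{1..N}. real k * \<delta> < s}. 1)"
    by (rule sum.inter_filter[symmetric]) simp
  also have "{k\<in>{1..N}. real k * \<delta> < s} = {1..<nat c}"
  proof (rule set_eqI)
    fix k
    have "int k < c \<longleftrightarrow> k < nat c" using c0 by linarith
    moreover have "k < nat c \<Longrightarrow> k \<le> N" using cN by linarith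
    ultimately show "k \<in> {k\<in>{1..N}. real k * \<delta> < s} \<longleftrightarrow> k \<in> {1..<nat c}"
      unfolding iff by auto
  qed
  finally have S: "(\<Sum>k\<in>{1..N}. if real k * \<delta> < s then 1 else (0::real)) = real (nat c - 1)" by simp
  show ?thesis
  proof (cases "c = 0")
    case True
    then have "s = 0" using c1 s0 d by (simp add: divide_le_0_iff)
    then show ?thesis using S True d by simp
  next
    case False
    then have "real (nat c - 1) = real_of_int c - 1" using c0 by (simp add: of_nat_diff)
    moreover have "(real_of_int c - 1) * \<delta> < s" "s \<le> real_of_int c * \<delta>"
      using c1 d by (simp_all add: pos_less_divide_eq pos_divide_le_eq)
    ultimately have "s - \<delta> * real (nat c - 1) = s - (real_of_int c * \<delta> - \<delta>)"
      by (simp add: algebra_simps)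
    then show ?thesis unfolding S using \<open>(real_of_int c - 1) * \<delta> < s\<close> \<open>s \<le> real_of_int c * \<delta>\<close>
      by (simp add: algebra_simps)
  qed
qed

definition En :: "'i set \<Rightarrow> nat \<Rightarrow> 'i set" where
  "En J n = (if J = {} then {} else from_nat_into J ` {..<n})"

lemma subfam_meas:
  assumes "\<And>i. i \<in> J \<Longrightarrow> X i \<in> borel_measurable M"
  shows "subfam X J \<in> measurable M (PiM J (\<lambda>_. borel))"
  unfolding subfam_def by (rule measurable_restrict) (use assms in simp)

lemma subfam_space: "subfam X J \<omega> \<in> space (PiM J (\<lambda>_. borel))"
  unfolding subfam_def space_PiM by auto

lemma approx_fun:
  fixes M :: "'w measure" and le :: "'a::polish_space \<Rightarrow> 'a \<Rightarrow> bool" and X :: "'i \<Rightarrow> 'w \<Rightarrow> 'a"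
  assumes P: "prob_space M" and cl: "closed {(x,y). le x y}"
    and refl: "\<forall>x. le x x" and tr: "\<forall>x y z. le x y \<and> le y z \<longrightarrow> le x z"
    and J: "countable J" and Xm: "\<And>i. i \<in> J \<Longrightarrow> X i \<in> borel_measurable M"
    and f: "bdd_mono_fun le J f" and B: "B > 0" and fB: "\<forall>x\<in>space (PiM J (\<lambda>_. borel)). \<bar>f x\<bar> \<le> B"
    and eps: "\<epsilon> > 0"
  shows "\<exists>n0. \<forall>n\<ge>n0. \<exists>h. bdd_mono_fun le (En J n) h \<and>
     (\<forall>x\<in>space (PiM (En J n) (\<lambda>_. borel)). \<bar>h x\<bar> \<le> B) \<and>
     (\<integral>\<omega>. \<bar>f (subfam X J \<omega>) - h (subfam X (En J n) \<omega>)\<bar> \<partial>M) < \<epsilon>"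
proof (cases "J = {}")
  case True
  then have "En J n = J" for n unfolding En_def by simp
  then show ?thesis using f fB eps by (intro exI[of _ 0] allI impI exI[of _ f]) simp
next
  case Jne: False
  interpret prob_space M by (rule P)
  have fm: "f \<in> borel_measurable (PiM J (\<lambda>_. borel))" and
    fmono: "\<And>x y. x \<in> space (PiM J (\<lambda>_. borel)) \<Longrightarrow> y \<in> space (PiM J (\<lambda>_. borel)) \<Longrightarrow>
       (\<forall>i\<in>J. le (x i) (y i)) \<Longrightarrow> f x \<le> f y"
    using f unfolding bdd_mono_fun_def by blast+
  obtain N :: nat where N: "4*B/\<epsilon> < real N" using reals_Archimedean2 by blast
  have "0 < 4*B/\<epsilon>" using B eps by simp
  then have Npos: "0 < real N" using N by linarith
  then have N1: "N \<ge> 1" by simp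
  have "4*B < real N * \<epsilon>" using N eps by (simp add: divide_less_eq)
  define \<delta> where "\<delta> = 2*B / real N"
  have dpos: "\<delta> > 0" unfolding \<delta>_def using B Npos by simp
  have Nd: "real N * \<delta> = 2*B" unfolding \<delta>_def using Npos by simp
  have dsmall: "\<delta> < \<epsilon>/2" unfolding \<delta>_def using \<open>4*B < real N * \<epsilon>\<close> Npos
    by (simp add: divide_less_eq mult.commute)
  define \<epsilon>' where "\<epsilon>' = \<epsilon> / (4*B)"
  have e'pos: "\<epsilon>' > 0" unfolding \<epsilon>'_def using eps B by simp
  have Nde: "real N * \<delta> * \<epsilon>' = \<epsilon>/2" unfolding Nd \<epsilon>'_def using B by simp
  define U where "U = (\<lambda>k::nat. {x \<in> space (PiM J (\<lambda>_. borel)). -B + real k * \<delta> < f x})"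
  have Um: "U k \<in> sets (PiM J (\<lambda>_. borel))" for k
  proof -
    have "U k = f -` {-B + real k * \<delta> <..} \<inter> space (PiM J (\<lambda>_. borel))" unfolding U_def by auto
    then show ?thesis using measurable_sets[OF fm, of "{-B + real k * \<delta> <..}"] by simp
  qed
  have Uup: "y \<in> U k" if xU: "x \<in> U k" and ys: "y \<in> space (PiM J (\<lambda>_. borel))"
    and xy: "\<forall>i\<in>J. le (x i) (y i)" for k x y
  proof -
    have xs: "x \<in> space (PiM J (\<lambda>_. borel))" and lt: "-B + real k * \<delta> < f x" using xU unfolding U_def by auto
    have "f x \<le> f y" by (rule fmono[OF xs ys xy])
    then show ?thesis using lt ys unfolding U_def by auto
  qed
  let ?J' = "\<lambda>n. from_nat_into J ` {..<n}"
  have ex1: "\<forall>k\<in>{1..N}. \<exists>n0. \<forall>n\<ge>n0. \<exists>V \<in> sets (PiM (?J' n) (\<lambda>_. borel)).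
     (\<forall>x y. x \<in> V \<longrightarrow> y \<in> space (PiM (?J' n) (\<lambda>_. borel)) \<longrightarrow>
        (\<forall>i\<in>?J' n. le (x i) (y i)) \<longrightarrow> y \<in> V) \<and>
     measure M {\<omega> \<in> space M. (subfam X J \<omega> \<in> U k) \<noteq> (subfam X (?J' n) \<omega> \<in> V)} < \<epsilon>'"
    by (intro ballI approx_upper[OF P cl refl tr J Jne Xm Um Uup e'pos]) auto
  obtain n0f where n0f: "\<And>k n. k \<in> {1..N} \<Longrightarrow> n \<ge> n0f k \<Longrightarrow> \<exists>V \<in> sets (PiM (?J' n) (\<lambda>_. borel)).
     (\<forall>x y. x \<in> V \<longrightarrow> y \<in> space (PiM (?J' n) (\<lambda>_. borel)) \<longrightarrow>
        (\<forall>i\<in>?J' n. le (x i) (y i)) \<longrightarrow> y \<in> V) \<and>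
     measure M {\<omega> \<in> space M. (subfam X J \<omega> \<in> U k) \<noteq> (subfam X (?J' n) \<omega> \<in> V)} < \<epsilon>'"
    using bchoice[OF ex1] by blast
  define n0 where "n0 = Max (n0f ` {1..N})"
  show ?thesis
  proof (intro exI[of _ n0] allI impI)
    fix n assume nn0: "n0 \<le> n"
    define J' where "J' = ?J' n"
    have EnJ: "En J n = J'" unfolding En_def J'_def using Jne by simp
    have J'J: "J' \<subseteq> J" unfolding J'_def using Jne by (auto intro: from_nat_into)
    have ex2: "\<forall>k\<in>{1..N}. \<exists>V. V \<in> sets (PiM J' (\<lambda>_. borel)) \<and>
     (\<forall>x y. x \<in> V \<longrightarrow> y \<in> space (PiM J' (\<lambda>_. borel)) \<longrightarrow>
        (\<forall>i\<in>J'. le (x i) (y i)) \<longrightarrow> y \<in> V) \<and>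
     measure M {\<omega> \<in> space M. (subfam X J \<omega> \<in> U k) \<noteq> (subfam X J' \<omega> \<in> V)} < \<epsilon>'"
    proof
      fix k assume k: "k \<in> {1..N}"
      have "n0f k \<le> n0" unfolding n0_def using k by (intro Max_ge) auto
      then show "\<exists>V. V \<in> sets (PiM J' (\<lambda>_. borel)) \<and>
     (\<forall>x y. x \<in> V \<longrightarrow> y \<in> space (PiM J' (\<lambda>_. borel)) \<longrightarrow>
        (\<forall>i\<in>J'. le (x i) (y i)) \<longrightarrow> y \<in> V) \<and>
     measure M {\<omega> \<in> space M. (subfam X J \<omega> \<in> U k) \<noteq> (subfam X J' \<omega> \<in> V)} < \<epsilon>'"
        using n0f[OF k, of n] nn0 unfolding J'_def by auto
    qed
    obtain V where Vm: "\<And>k. k \<in> {1..N} \<Longrightarrow> V k \<in> sets (PiM J' (\<lambda>_. borel))"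
      and Vup: "\<And>k x y. k \<in> {1..N} \<Longrightarrow> x \<in> V k \<Longrightarrow> y \<in> space (PiM J' (\<lambda>_. borel)) \<Longrightarrow>
        (\<forall>i\<in>J'. le (x i) (y i)) \<Longrightarrow> y \<in> V k"
      and Vmeas: "\<And>k. k \<in> {1..N} \<Longrightarrow>
        measure M {\<omega> \<in> space M. (subfam X J \<omega> \<in> U k) \<noteq> (subfam X J' \<omega> \<in> V k)} < \<epsilon>'"
      using bchoice[OF ex2] by blast
    define h where "h = (\<lambda>y. -B + \<delta> * (\<Sum>k\<in>{1..N}. indicator (V k) y))"
    have hm: "h \<in> borel_measurable (PiM J' (\<lambda>_. borel))" unfolding h_def
      by (intro borel_measurable_add borel_measurable_const borel_measurable_times
          borel_measurable_sum borel_measurable_indicator Vm)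
    have sum_bd: "0 \<le> (\<Sum>k\<in>{1..N}. indicator (V k) y :: real) \<and> (\<Sum>k\<in>{1..N}. indicator (V k) y) \<le> real N" for y :: "'i \<Rightarrow> 'a"
    proof
      show "0 \<le> (\<Sum>k\<in>{1..N}. indicator (V k) y :: real)" by (simp add: sum_nonneg)
      have "(\<Sum>k\<in>{1..N}. indicator (V k) y) \<le> (\<Sum>k\<in>{1..N}. (1::real))"
        by (intro sum_mono) (simp add: indicator_def)
      then show "(\<Sum>k\<in>{1..N}. indicator (V k) y) \<le> real N" by simp
    qed
    have hB: "\<forall>x\<in>space (PiM J' (\<lambda>_. borel)). \<bar>h x\<bar> \<le> B"
    proof
      fix x
      have "0 \<le> \<delta> * (\<Sum>k\<in>{1..N}. indicator (V k) x)" using sum_bd[of x] dpos by simp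
      moreover have "\<delta> * (\<Sum>k\<in>{1..N}. indicator (V k) x) \<le> \<delta> * real N"
        using sum_bd[of x] dpos by (intro mult_left_mono) auto
      ultimately show "\<bar>h x\<bar> \<le> B" unfolding h_def using Nd by (simp add: abs_le_iff mult.commute)
    qed
    have hmono: "h x \<le> h y" if x: "x \<in> space (PiM J' (\<lambda>_. borel))" and y: "y \<in> space (PiM J' (\<lambda>_. borel))"
      and xy: "\<forall>i\<in>J'. le (x i) (y i)" for x y
    proof -
      have "(\<Sum>k\<in>{1..N}. indicator (V k) x) \<le> (\<Sum>k\<in>{1..N}. (indicator (V k) y :: real))"
      proof (intro sum_mono)
        fix k assume k: "k \<in> {1..N}"
        show "indicator (V k) x \<le> (indicator (V k) y :: real)"
          using Vup[OF k _ y xy] by (auto simp: indicator_def)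
      qed
      then show ?thesis unfolding h_def using dpos by (simp add: mult_left_mono)
    qed
    have hbdd: "bdd_mono_fun le J' h"
      unfolding bdd_mono_fun_def using hm hB hmono by blast
    have sJ: "subfam X J \<in> measurable M (PiM J (\<lambda>_. borel))" by (rule subfam_meas) (rule Xm)
    have sJ': "subfam X J' \<in> measurable M (PiM J' (\<lambda>_. borel))" by (rule subfam_meas) (use Xm J'J in blast)
    define E where "E = (\<lambda>k. {\<omega> \<in> space M. (subfam X J \<omega> \<in> U k) \<noteq> (subfam X J' \<omega> \<in> V k)})"
    have Em: "E k \<in> sets M" if k: "k \<in> {1..N}" for k
    proof -
      have A1: "subfam X J -` U k \<inter> space M \<in> sets M" using measurable_sets[OF sJ Um] .
      have A2: "subfam X J' -` V k \<inter> space M \<in> sets M" using measurable_sets[OF sJ' Vm[OF k]] .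
      have "E k = ((subfam X J -` U k \<inter> space M) - (subfam X J' -` V k \<inter> space M)) \<union>
                  ((subfam X J' -` V k \<inter> space M) - (subfam X J -` U k \<inter> space M))"
        unfolding E_def by auto
      then show ?thesis using A1 A2 by auto
    qed
    have pw: "\<bar>f (subfam X J \<omega>) - h (subfam X J' \<omega>)\<bar> \<le> \<delta> + \<delta> * (\<Sum>k\<in>{1..N}. indicator (E k) \<omega>)"
      if \<omega>: "\<omega> \<in> space M" for \<omega>
    proof -
      define x where "x = subfam X J \<omega>"
      define y where "y = subfam X J' \<omega>"
      have xs: "x \<in> space (PiM J (\<lambda>_. borel))" unfolding x_def by (rule subfam_space)
      have ind: "indicator (U k) x = (if real k * \<delta> < f x + B then 1 else (0::real))" for k
        unfolding U_def using xs by (auto simp: indicator_def)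
      define g where "g = -B + \<delta> * (\<Sum>k\<in>{1..N}. indicator (U k) x)"
      have "\<bar>(f x + B) - \<delta> * (\<Sum>k\<in>{1..N}. if real k * \<delta> < f x + B then 1 else 0)\<bar> \<le> \<delta>"
        by (rule count_approx[OF dpos]) (use fB xs Nd in auto)
      then have fg: "\<bar>f x - g\<bar> \<le> \<delta>" unfolding g_def ind by simp
      have "\<bar>g - h y\<bar> = \<delta> * \<bar>\<Sum>k\<in>{1..N}. indicator (U k) x - indicator (V k) y\<bar>"
        unfolding g_def h_def using dpos by (simp add: sum_subtractf abs_mult flip: right_diff_distrib)
      also have "\<dots> \<le> \<delta> * (\<Sum>k\<in>{1..N}. \<bar>indicator (U k) x - indicator (V k) y\<bar>)"
        using dpos by (intro mult_left_mono sum_abs) auto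
      also have "(\<Sum>k\<in>{1..N}. \<bar>indicator (U k) x - indicator (V k) y\<bar>) = (\<Sum>k\<in>{1..N}. indicator (E k) \<omega> :: real)"
      proof (rule sum.cong[OF HOL.refl])
        fix k assume "k \<in> {1..N}"
        show "\<bar>indicator (U k) x - indicator (V k) y\<bar> = (indicator (E k) \<omega> :: real)"
          using \<omega> unfolding E_def x_def y_def
          by (cases "subfam X J \<omega> \<in> U k"; cases "subfam X J' \<omega> \<in> V k") simp_all
      qed
      finally have "\<bar>g - h y\<bar> \<le> \<delta> * (\<Sum>k\<in>{1..N}. indicator (E k) \<omega>)" .
      then show ?thesis using fg unfolding x_def y_def by linarith
    qed
    have int1: "integrable M (\<lambda>\<omega>. \<bar>f (subfam X J \<omega>) - h (subfam X J' \<omega>)\<bar>)"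
    proof (rule integrable_const_bound[where B="2*B"])
      show "AE \<omega> in M. norm \<bar>f (subfam X J \<omega>) - h (subfam X J' \<omega>)\<bar> \<le> 2*B"
      proof (rule AE_I2)
        fix \<omega> assume "\<omega> \<in> space M"
        have a: "\<bar>f (subfam X J \<omega>)\<bar> \<le> B" using bspec[OF fB subfam_space[of X J \<omega>]] .
        have b: "\<bar>h (subfam X J' \<omega>)\<bar> \<le> B" using bspec[OF hB subfam_space[of X J' \<omega>]] .
        show "norm \<bar>f (subfam X J \<omega>) - h (subfam X J' \<omega>)\<bar> \<le> 2*B"
          using a b by (auto simp: abs_le_iff)
      qed
      show "(\<lambda>\<omega>. \<bar>f (subfam X J \<omega>) - h (subfam X J' \<omega>)\<bar>) \<in> borel_measurable M"
        using measurable_comp[OF sJ fm] measurable_comp[OF sJ' hm] by (simp add: o_def)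
    qed
    have intE: "integrable M (indicator (E k) :: 'w \<Rightarrow> real)" if "k \<in> {1..N}" for k
      using Em[OF that] by (intro integrable_real_indicator) (auto simp: less_top[symmetric])
    have intS: "integrable M (\<lambda>\<omega>. \<Sum>k\<in>{1..N}. (indicator (E k) \<omega> :: real))"
      by (rule Bochner_Integration.integrable_sum) (rule intE)
    have int2: "integrable M (\<lambda>\<omega>. \<delta> + \<delta> * (\<Sum>k\<in>{1..N}. indicator (E k) \<omega>))"
      using intS by simp
    have "(\<integral>\<omega>. \<bar>f (subfam X J \<omega>) - h (subfam X J' \<omega>)\<bar> \<partial>M)
        \<le> (\<integral>\<omega>. \<delta> + \<delta> * (\<Sum>k\<in>{1..N}. indicator (E k) \<omega>) \<partial>M)"
      by (rule integral_mono[OF int1 int2 pw])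
    also have "\<dots> = \<delta> + \<delta> * (\<Sum>k\<in>{1..N}. measure M (E k))"
      using intS intE Em by (simp add: Bochner_Integration.integral_sum prob_space)
    also have "\<dots> < \<epsilon>/2 + \<epsilon>/2"
    proof -
      have "(\<Sum>k\<in>{1..N}. measure M (E k)) < (\<Sum>k\<in>{1..N}. \<epsilon>')"
        using Vmeas N1 unfolding E_def by (intro sum_strict_mono) auto
      then have "\<delta> * (\<Sum>k\<in>{1..N}. measure M (E k)) < \<delta> * (real N * \<epsilon>')"
        using dpos by simp
      also have "\<dots> = \<epsilon>/2" using Nde by (simp add: algebra_simps)
      finally show ?thesis using dsmall by linarith
    qed
    finally show "\<exists>h. bdd_mono_fun le (En J n) h \<and>
     (\<forall>x\<in>space (PiM (En J n) (\<lambda>_. borel)). \<bar>h x\<bar> \<le> B) \<and>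
     (\<integral>\<omega>. \<bar>f (subfam X J \<omega>) - h (subfam X (En J n) \<omega>)\<bar> \<partial>M) < \<epsilon>"
      using hbdd hB unfolding EnJ by (intro exI[of _ h]) simp
  qed
qed



lemma En_sub: "En J n \<subseteq> J"
  unfolding En_def by (auto intro: from_nat_into)

lemma En_fin: "finite (En J n)"
  unfolding En_def by auto

lemma cov_approx:
  fixes F G H K :: "'w \<Rightarrow> real"
  assumes P: "prob_space M"
    and mF: "F \<in> borel_measurable M" and mG: "G \<in> borel_measurable M"
    and mH: "H \<in> borel_measurable M" and mK: "K \<in> borel_measurable M"
    and a0: "a \<ge> 0" and b0: "b \<ge> 0"
    and bd: "\<And>\<omega>. \<omega> \<in> space M \<Longrightarrow> \<bar>F \<omega>\<bar> \<le> a \<and> \<bar>H \<omega>\<bar> \<le> a \<and> \<bar>G \<omega>\<bar> \<le> b \<and> \<bar>K \<omega>\<bar> \<le> b"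
    and e1: "(\<integral>\<omega>. \<bar>F \<omega> - H \<omega>\<bar> \<partial>M) \<le> \<eta>" and e2: "(\<integral>\<omega>. \<bar>G \<omega> - K \<omega>\<bar> \<partial>M) \<le> \<eta>"
  shows "(\<integral>\<omega>. F \<omega> * G \<omega> \<partial>M) \<le> (\<integral>\<omega>. H \<omega> * K \<omega> \<partial>M) + (a+b)*\<eta>"
    and "(\<integral>\<omega>. H \<omega> \<partial>M) * (\<integral>\<omega>. K \<omega> \<partial>M) \<le> (\<integral>\<omega>. F \<omega> \<partial>M) * (\<integral>\<omega>. G \<omega> \<partial>M) + (a+b)*\<eta>"
proof -
  interpret prob_space M by (rule P)
  have iF: "integrable M F" using bd mF by (intro integrable_const_bound[where B=a]) (auto intro: AE_I2)
  have iH: "integrable M H" using bd mH by (intro integrable_const_bound[where B=a]) (auto intro: AE_I2)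
  have iG: "integrable M G" using bd mG by (intro integrable_const_bound[where B=b]) (auto intro: AE_I2)
  have iK: "integrable M K" using bd mK by (intro integrable_const_bound[where B=b]) (auto intro: AE_I2)
  have bprod: "\<bar>u * v\<bar> \<le> a * b" if "\<bar>u\<bar> \<le> a" "\<bar>v\<bar> \<le> b" for u v :: real
    unfolding abs_mult using that by (intro mult_mono) auto
  have iFG: "integrable M (\<lambda>\<omega>. F \<omega> * G \<omega>)"
    using bd bprod mF mG by (intro integrable_const_bound[where B="a*b"]) (auto intro: AE_I2)
  have iHK: "integrable M (\<lambda>\<omega>. H \<omega> * K \<omega>)"
    using bd bprod mH mK by (intro integrable_const_bound[where B="a*b"]) (auto intro: AE_I2)
  have iD1: "integrable M (\<lambda>\<omega>. \<bar>F \<omega> - H \<omega>\<bar>)" using iF iH by auto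
  have iD2: "integrable M (\<lambda>\<omega>. \<bar>G \<omega> - K \<omega>\<bar>)" using iG iK by auto
  have pw: "F \<omega> * G \<omega> - H \<omega> * K \<omega> \<le> b * \<bar>F \<omega> - H \<omega>\<bar> + a * \<bar>G \<omega> - K \<omega>\<bar>"
    if \<omega>: "\<omega> \<in> space M" for \<omega>
  proof -
    have "F \<omega> * G \<omega> - H \<omega> * K \<omega> = (F \<omega> - H \<omega>) * G \<omega> + H \<omega> * (G \<omega> - K \<omega>)"
      by (simp add: algebra_simps)
    also have "(F \<omega> - H \<omega>) * G \<omega> \<le> \<bar>F \<omega> - H \<omega>\<bar> * b"
    proof -
      have "(F \<omega> - H \<omega>) * G \<omega> \<le> \<bar>F \<omega> - H \<omega>\<bar> * \<bar>G \<omega>\<bar>" by (metis abs_ge_self abs_mult)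
      also have "\<dots> \<le> \<bar>F \<omega> - H \<omega>\<bar> * b" using bd[OF \<omega>] by (intro mult_left_mono) auto
      finally show ?thesis .
    qed
    also have "H \<omega> * (G \<omega> - K \<omega>) \<le> a * \<bar>G \<omega> - K \<omega>\<bar>"
    proof -
      have "H \<omega> * (G \<omega> - K \<omega>) \<le> \<bar>H \<omega>\<bar> * \<bar>G \<omega> - K \<omega>\<bar>" by (metis abs_ge_self abs_mult)
      also have "\<dots> \<le> a * \<bar>G \<omega> - K \<omega>\<bar>" using bd[OF \<omega>] by (intro mult_right_mono) auto
      finally show ?thesis .
    qed
    finally show ?thesis by (simp add: mult.commute)
  qed
  have "(\<integral>\<omega>. F \<omega> * G \<omega> \<partial>M) - (\<integral>\<omega>. H \<omega> * K \<omega> \<partial>M) = (\<integral>\<omega>. F \<omega> * G \<omega> - H \<omega> * K \<omega> \<partial>M)"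
    using iFG iHK by simp
  also have "\<dots> \<le> (\<integral>\<omega>. b * \<bar>F \<omega> - H \<omega>\<bar> + a * \<bar>G \<omega> - K \<omega>\<bar> \<partial>M)"
    using iFG iHK iD1 iD2 pw by (intro integral_mono) auto
  also have "\<dots> = b * (\<integral>\<omega>. \<bar>F \<omega> - H \<omega>\<bar> \<partial>M) + a * (\<integral>\<omega>. \<bar>G \<omega> - K \<omega>\<bar> \<partial>M)"
    using iD1 iD2 by simp
  also have "\<dots> \<le> b * \<eta> + a * \<eta>"
    using e1 e2 a0 b0 by (intro add_mono mult_left_mono) auto
  finally show "(\<integral>\<omega>. F \<omega> * G \<omega> \<partial>M) \<le> (\<integral>\<omega>. H \<omega> * K \<omega> \<partial>M) + (a+b)*\<eta>"
    by (simp add: algebra_simps)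
  have absint: "\<bar>integral\<^sup>L M f\<bar> \<le> (\<integral>\<omega>. \<bar>f \<omega>\<bar> \<partial>M)" for f :: "'w \<Rightarrow> real"
    using integral_norm_bound[of M f] by simp
  have bK: "\<bar>\<integral>\<omega>. K \<omega> \<partial>M\<bar> \<le> b"
  proof -
    have "(\<integral>\<omega>. \<bar>K \<omega>\<bar> \<partial>M) \<le> (\<integral>\<omega>. b \<partial>M)"
      using iK bd by (intro integral_mono) auto
    then have "(\<integral>\<omega>. \<bar>K \<omega>\<bar> \<partial>M) \<le> b" using prob_space by simp
    then show ?thesis using absint[of K] by linarith
  qed
  have bF: "\<bar>\<integral>\<omega>. F \<omega> \<partial>M\<bar> \<le> a"
  proof -
    have "(\<integral>\<omega>. \<bar>F \<omega>\<bar> \<partial>M) \<le> (\<integral>\<omega>. a \<partial>M)"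
      using iF bd by (intro integral_mono) auto
    then have "(\<integral>\<omega>. \<bar>F \<omega>\<bar> \<partial>M) \<le> a" using prob_space by simp
    then show ?thesis using absint[of F] by linarith
  qed
  have d1: "\<bar>(\<integral>\<omega>. H \<omega> \<partial>M) - (\<integral>\<omega>. F \<omega> \<partial>M)\<bar> \<le> \<eta>"
  proof -
    have "(\<integral>\<omega>. H \<omega> \<partial>M) - (\<integral>\<omega>. F \<omega> \<partial>M) = (\<integral>\<omega>. H \<omega> - F \<omega> \<partial>M)" using iF iH by simp
    then have "\<bar>(\<integral>\<omega>. H \<omega> \<partial>M) - (\<integral>\<omega>. F \<omega> \<partial>M)\<bar> \<le> (\<integral>\<omega>. \<bar>H \<omega> - F \<omega>\<bar> \<partial>M)"
      using absint[of "\<lambda>\<omega>. H \<omega> - F \<omega>"] by simp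
    also have "\<dots> = (\<integral>\<omega>. \<bar>F \<omega> - H \<omega>\<bar> \<partial>M)" by (simp add: abs_minus_commute)
    finally show ?thesis using e1 by linarith
  qed
  have d2: "\<bar>(\<integral>\<omega>. K \<omega> \<partial>M) - (\<integral>\<omega>. G \<omega> \<partial>M)\<bar> \<le> \<eta>"
  proof -
    have "(\<integral>\<omega>. K \<omega> \<partial>M) - (\<integral>\<omega>. G \<omega> \<partial>M) = (\<integral>\<omega>. K \<omega> - G \<omega> \<partial>M)" using iG iK by simp
    then have "\<bar>(\<integral>\<omega>. K \<omega> \<partial>M) - (\<integral>\<omega>. G \<omega> \<partial>M)\<bar> \<le> (\<integral>\<omega>. \<bar>K \<omega> - G \<omega>\<bar> \<partial>M)"
      using absint[of "\<lambda>\<omega>. K \<omega> - G \<omega>"] by simp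
    also have "\<dots> = (\<integral>\<omega>. \<bar>G \<omega> - K \<omega>\<bar> \<partial>M)" by (simp add: abs_minus_commute)
    finally show ?thesis using e2 by linarith
  qed
  define iH' where "iH' = (\<integral>\<omega>. H \<omega> \<partial>M)"
  define iK' where "iK' = (\<integral>\<omega>. K \<omega> \<partial>M)"
  define iF' where "iF' = (\<integral>\<omega>. F \<omega> \<partial>M)"
  define iG' where "iG' = (\<integral>\<omega>. G \<omega> \<partial>M)"
  have "iH' * iK' - iF' * iG' = (iH' - iF') * iK' + iF' * (iK' - iG')" by (simp add: algebra_simps)
  also have "\<dots> \<le> \<bar>iH' - iF'\<bar> * \<bar>iK'\<bar> + \<bar>iF'\<bar> * \<bar>iK' - iG'\<bar>"
    by (intro add_mono) (metis abs_ge_self abs_mult)+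
  also have "\<dots> \<le> \<eta> * b + a * \<eta>"
    using d1 d2 bK bF unfolding iH'_def iK'_def iF'_def iG'_def
    by (intro add_mono mult_mono) auto
  finally show "(\<integral>\<omega>. H \<omega> \<partial>M) * (\<integral>\<omega>. K \<omega> \<partial>M) \<le> (\<integral>\<omega>. F \<omega> \<partial>M) * (\<integral>\<omega>. G \<omega> \<partial>M) + (a+b)*\<eta>"
    unfolding iH'_def iK'_def iF'_def iG'_def by (simp add: algebra_simps)
qed



lemma bdd_mono_parts:
  assumes "bdd_mono_fun le J f"
  obtains B where "B > 0" "\<forall>x\<in>space (PiM J (\<lambda>_. borel)). \<bar>f x\<bar> \<le> B"
    "f \<in> borel_measurable (PiM J (\<lambda>_. borel))"
proof -
  obtain B0 where "\<forall>x\<in>space (PiM J (\<lambda>_. borel)). \<bar>f x\<bar> \<le> B0"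
    using assms unfolding bdd_mono_fun_def by blast
  then have "\<forall>x\<in>space (PiM J (\<lambda>_. borel)). \<bar>f x\<bar> \<le> \<bar>B0\<bar> + 1" by force
  moreover have "\<bar>B0\<bar> + 1 > 0" by simp
  ultimately show ?thesis using that assms unfolding bdd_mono_fun_def by blast
qed

lemma NA_main:
  fixes M :: "'w measure" and le :: "'a::polish_space \<Rightarrow> 'a \<Rightarrow> bool"
    and X :: "'i \<Rightarrow> 'w \<Rightarrow> 'a" and I :: "'i set"
  assumes P: "prob_space M" and po: "pop_order le" and I: "countable I"
    and Xm: "\<And>i. i \<in> I \<Longrightarrow> X i \<in> measurable M borel"
    and fin: "\<forall>J. finite J \<and> J \<subseteq> I \<longrightarrow> neg_assoc M le X J"
  shows "neg_assoc M le X I"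
  unfolding neg_assoc_def
proof (intro allI impI, elim conjE)
  fix J f g assume JI: "J \<subseteq> I" and f: "bdd_mono_fun le J f" and g: "bdd_mono_fun le (I - J) g"
  interpret prob_space M by (rule P)
  have cl: "closed {(x,y). le x y}" and rf: "\<forall>x. le x x" and tr: "\<forall>x y z. le x y \<and> le y z \<longrightarrow> le x z"
    using po unfolding pop_order_def by blast+
  obtain Bf where Bf: "Bf > 0" "\<forall>x\<in>space (PiM J (\<lambda>_. borel)). \<bar>f x\<bar> \<le> Bf"
    and fm: "f \<in> borel_measurable (PiM J (\<lambda>_. borel))" using bdd_mono_parts[OF f] by blast
  obtain Bg where Bg: "Bg > 0" "\<forall>x\<in>space (PiM (I-J) (\<lambda>_. borel)). \<bar>g x\<bar> \<le> Bg"
    and gm: "g \<in> borel_measurable (PiM (I-J) (\<lambda>_. borel))" using bdd_mono_parts[OF g] by blast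
  have cJ: "countable J" using I JI countable_subset by blast
  have cJ': "countable (I - J)" using I countable_subset by blast
  have XJ: "\<And>i. i \<in> J \<Longrightarrow> X i \<in> borel_measurable M" using Xm JI by blast
  have XJ': "\<And>i. i \<in> I - J \<Longrightarrow> X i \<in> borel_measurable M" using Xm by blast
  show "(\<integral>\<omega>. f (subfam X J \<omega>) * g (subfam X (I - J) \<omega>) \<partial>M)
          \<le> (\<integral>\<omega>. f (subfam X J \<omega>) \<partial>M) * (\<integral>\<omega>. g (subfam X (I - J) \<omega>) \<partial>M)"
  proof (rule field_le_epsilon)
    fix e :: real assume e: "0 < e"
    define \<eta> where "\<eta> = e / (2 * (Bf + Bg))"
    have \<eta>: "\<eta> > 0" unfolding \<eta>_def using e Bf Bg by simp
    have "2 * (Bf + Bg) > 0" using Bf Bg by simp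
    then have e2: "2 * ((Bf + Bg) * \<eta>) = e" unfolding \<eta>_def by (simp add: field_simps)
    obtain n1 where n1: "\<And>n. n \<ge> n1 \<Longrightarrow> \<exists>h. bdd_mono_fun le (En J n) h \<and>
       (\<forall>x\<in>space (PiM (En J n) (\<lambda>_. borel)). \<bar>h x\<bar> \<le> Bf) \<and>
       (\<integral>\<omega>. \<bar>f (subfam X J \<omega>) - h (subfam X (En J n) \<omega>)\<bar> \<partial>M) < \<eta>"
      using approx_fun[where X=X, OF P cl rf tr cJ XJ f Bf \<eta>] by blast
    obtain n2 where n2: "\<And>n. n \<ge> n2 \<Longrightarrow> \<exists>h. bdd_mono_fun le (En (I-J) n) h \<and>
       (\<forall>x\<in>space (PiM (En (I-J) n) (\<lambda>_. borel)). \<bar>h x\<bar> \<le> Bg) \<and>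
       (\<integral>\<omega>. \<bar>g (subfam X (I-J) \<omega>) - h (subfam X (En (I-J) n) \<omega>)\<bar> \<partial>M) < \<eta>"
      using approx_fun[where X=X, OF P cl rf tr cJ' XJ' g Bg \<eta>] by blast
    define n where "n = max n1 n2"
    obtain h where h: "bdd_mono_fun le (En J n) h" "\<forall>x\<in>space (PiM (En J n) (\<lambda>_. borel)). \<bar>h x\<bar> \<le> Bf"
       "(\<integral>\<omega>. \<bar>f (subfam X J \<omega>) - h (subfam X (En J n) \<omega>)\<bar> \<partial>M) < \<eta>"
      using n1[of n] unfolding n_def by auto
    obtain k where k: "bdd_mono_fun le (En (I-J) n) k" "\<forall>x\<in>space (PiM (En (I-J) n) (\<lambda>_. borel)). \<bar>k x\<bar> \<le> Bg"
       "(\<integral>\<omega>. \<bar>g (subfam X (I-J) \<omega>) - k (subfam X (En (I-J) n) \<omega>)\<bar> \<partial>M) < \<eta>"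
      using n2[of n] unfolding n_def by auto
    define J0 where "J0 = En J n"
    define J1 where "J1 = En (I-J) n"
    have J0J: "J0 \<subseteq> J" unfolding J0_def by (rule En_sub)
    have J1J: "J1 \<subseteq> I - J" unfolding J1_def by (rule En_sub)
    have K0: "finite (J0 \<union> J1) \<and> J0 \<union> J1 \<subseteq> I"
      using J0J J1J JI En_fin unfolding J0_def J1_def by auto
    have diff: "(J0 \<union> J1) - J0 = J1" using J0J J1J by auto
    have NA0: "neg_assoc M le X (J0 \<union> J1)" using fin K0 by blast
    have ineq: "(\<integral>\<omega>. h (subfam X J0 \<omega>) * k (subfam X J1 \<omega>) \<partial>M)
        \<le> (\<integral>\<omega>. h (subfam X J0 \<omega>) \<partial>M) * (\<integral>\<omega>. k (subfam X J1 \<omega>) \<partial>M)"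
    proof -
      have pre: "J0 \<subseteq> J0 \<union> J1 \<and> bdd_mono_fun le J0 h \<and> bdd_mono_fun le ((J0 \<union> J1) - J0) k"
        using h(1) k(1) diff unfolding J0_def J1_def by simp
      have "(\<integral>\<omega>. h (subfam X J0 \<omega>) * k (subfam X ((J0 \<union> J1) - J0) \<omega>) \<partial>M)
        \<le> (\<integral>\<omega>. h (subfam X J0 \<omega>) \<partial>M) * (\<integral>\<omega>. k (subfam X ((J0 \<union> J1) - J0) \<omega>) \<partial>M)"
        using NA0 pre unfolding neg_assoc_def by blast
      then show ?thesis unfolding diff .
    qed
    have hm: "h \<in> borel_measurable (PiM J0 (\<lambda>_. borel))" using h(1) unfolding bdd_mono_fun_def J0_def by blast
    have km: "k \<in> borel_measurable (PiM J1 (\<lambda>_. borel))" using k(1) unfolding bdd_mono_fun_def J1_def by blast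
    have XJ0: "\<And>i. i \<in> J0 \<Longrightarrow> X i \<in> borel_measurable M" using XJ J0J by blast
    have XJ1: "\<And>i. i \<in> J1 \<Longrightarrow> X i \<in> borel_measurable M" using XJ' J1J by blast
    have c: "(\<integral>\<omega>. f (subfam X J \<omega>) * g (subfam X (I - J) \<omega>) \<partial>M) \<le>
          (\<integral>\<omega>. h (subfam X J0 \<omega>) * k (subfam X J1 \<omega>) \<partial>M) + (Bf+Bg)*\<eta>"
     and d: "(\<integral>\<omega>. h (subfam X J0 \<omega>) \<partial>M) * (\<integral>\<omega>. k (subfam X J1 \<omega>) \<partial>M) \<le>
          (\<integral>\<omega>. f (subfam X J \<omega>) \<partial>M) * (\<integral>\<omega>. g (subfam X (I - J) \<omega>) \<partial>M) + (Bf+Bg)*\<eta>"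
    proof -
      note cov = cov_approx[OF P, where F="\<lambda>\<omega>. f (subfam X J \<omega>)" and G="\<lambda>\<omega>. g (subfam X (I - J) \<omega>)"
          and H="\<lambda>\<omega>. h (subfam X J0 \<omega>)" and K="\<lambda>\<omega>. k (subfam X J1 \<omega>)" and a=Bf and b=Bg and \<eta>=\<eta>]
      have m1: "(\<lambda>\<omega>. f (subfam X J \<omega>)) \<in> borel_measurable M"
        using measurable_comp[OF subfam_meas[where X=X, OF XJ] fm] by (simp add: o_def)
      have m2: "(\<lambda>\<omega>. g (subfam X (I-J) \<omega>)) \<in> borel_measurable M"
        using measurable_comp[OF subfam_meas[where X=X, OF XJ'] gm] by (simp add: o_def)
      have m3: "(\<lambda>\<omega>. h (subfam X J0 \<omega>)) \<in> borel_measurable M"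
        using measurable_comp[OF subfam_meas[where X=X, OF XJ0] hm] by (simp add: o_def)
      have m4: "(\<lambda>\<omega>. k (subfam X J1 \<omega>)) \<in> borel_measurable M"
        using measurable_comp[OF subfam_meas[where X=X, OF XJ1] km] by (simp add: o_def)
      have bd: "\<bar>f (subfam X J \<omega>)\<bar> \<le> Bf \<and> \<bar>h (subfam X J0 \<omega>)\<bar> \<le> Bf \<and>
          \<bar>g (subfam X (I-J) \<omega>)\<bar> \<le> Bg \<and> \<bar>k (subfam X J1 \<omega>)\<bar> \<le> Bg" for \<omega>
        using bspec[OF Bf(2) subfam_space[of X J \<omega>]] bspec[OF h(2) subfam_space[of X "En J n" \<omega>]]
          bspec[OF Bg(2) subfam_space[of X "I-J" \<omega>]] bspec[OF k(2) subfam_space[of X "En (I-J) n" \<omega>]]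
        unfolding J0_def J1_def by blast
      have e1: "(\<integral>\<omega>. \<bar>f (subfam X J \<omega>) - h (subfam X J0 \<omega>)\<bar> \<partial>M) \<le> \<eta>" using h(3) unfolding J0_def by simp
      have e2': "(\<integral>\<omega>. \<bar>g (subfam X (I-J) \<omega>) - k (subfam X J1 \<omega>)\<bar> \<partial>M) \<le> \<eta>" using k(3) unfolding J1_def by simp
      show "(\<integral>\<omega>. f (subfam X J \<omega>) * g (subfam X (I - J) \<omega>) \<partial>M) \<le>
          (\<integral>\<omega>. h (subfam X J0 \<omega>) * k (subfam X J1 \<omega>) \<partial>M) + (Bf+Bg)*\<eta>"
        using cov(1)[OF m1 m2 m3 m4 _ _ bd e1 e2'] Bf Bg by simp
      show "(\<integral>\<omega>. h (subfam X J0 \<omega>) \<partial>M) * (\<integral>\<omega>. k (subfam X J1 \<omega>) \<partial>M) \<le>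
          (\<integral>\<omega>. f (subfam X J \<omega>) \<partial>M) * (\<integral>\<omega>. g (subfam X (I - J) \<omega>) \<partial>M) + (Bf+Bg)*\<eta>"
        using cov(2)[OF m1 m2 m3 m4 _ _ bd e1 e2'] Bf Bg by simp
    qed
    show "(\<integral>\<omega>. f (subfam X J \<omega>) * g (subfam X (I - J) \<omega>) \<partial>M)
          \<le> (\<integral>\<omega>. f (subfam X J \<omega>) \<partial>M) * (\<integral>\<omega>. g (subfam X (I - J) \<omega>) \<partial>M) + e"
      using c d ineq e2 by linarith
  qed
qed



lemma PA_main:
  fixes M :: "'w measure" and le :: "'a::polish_space \<Rightarrow> 'a \<Rightarrow> bool"
    and X :: "'i \<Rightarrow> 'w \<Rightarrow> 'a" and I :: "'i set"
  assumes P: "prob_space M" and po: "pop_order le" and I: "countable I"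
    and Xm: "\<And>i. i \<in> I \<Longrightarrow> X i \<in> measurable M borel"
    and fin: "\<forall>J. finite J \<and> J \<subseteq> I \<longrightarrow> pos_assoc M le X J"
  shows "pos_assoc M le X I"
  unfolding pos_assoc_def
proof (intro allI impI, elim conjE)
  fix J f g assume JI: "J \<subseteq> I" and f: "bdd_mono_fun le J f" and g: "bdd_mono_fun le J g"
  interpret prob_space M by (rule P)
  have cl: "closed {(x,y). le x y}" and rf: "\<forall>x. le x x" and tr: "\<forall>x y z. le x y \<and> le y z \<longrightarrow> le x z"
    using po unfolding pop_order_def by blast+
  obtain Bf where Bf: "Bf > 0" "\<forall>x\<in>space (PiM J (\<lambda>_. borel)). \<bar>f x\<bar> \<le> Bf"
    and fm: "f \<in> borel_measurable (PiM J (\<lambda>_. borel))" using bdd_mono_parts[OF f] by blast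
  obtain Bg where Bg: "Bg > 0" "\<forall>x\<in>space (PiM J (\<lambda>_. borel)). \<bar>g x\<bar> \<le> Bg"
    and gm: "g \<in> borel_measurable (PiM J (\<lambda>_. borel))" using bdd_mono_parts[OF g] by blast
  have cJ: "countable J" using I JI countable_subset by blast
  have XJ: "\<And>i. i \<in> J \<Longrightarrow> X i \<in> borel_measurable M" using Xm JI by blast
  show "(\<integral>\<omega>. f (subfam X J \<omega>) \<partial>M) * (\<integral>\<omega>. g (subfam X J \<omega>) \<partial>M)
          \<le> (\<integral>\<omega>. f (subfam X J \<omega>) * g (subfam X J \<omega>) \<partial>M)"
  proof (rule field_le_epsilon)
    fix e :: real assume e: "0 < e"
    define \<eta> where "\<eta> = e / (2 * (Bf + Bg))"
    have \<eta>: "\<eta> > 0" unfolding \<eta>_def using e Bf Bg by simp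
    have "2 * (Bf + Bg) > 0" using Bf Bg by simp
    then have e2: "2 * ((Bf + Bg) * \<eta>) = e" unfolding \<eta>_def by (simp add: field_simps)
    obtain n1 where n1: "\<And>n. n \<ge> n1 \<Longrightarrow> \<exists>h. bdd_mono_fun le (En J n) h \<and>
       (\<forall>x\<in>space (PiM (En J n) (\<lambda>_. borel)). \<bar>h x\<bar> \<le> Bf) \<and>
       (\<integral>\<omega>. \<bar>f (subfam X J \<omega>) - h (subfam X (En J n) \<omega>)\<bar> \<partial>M) < \<eta>"
      using approx_fun[where X=X, OF P cl rf tr cJ XJ f Bf \<eta>] by blast
    obtain n2 where n2: "\<And>n. n \<ge> n2 \<Longrightarrow> \<exists>h. bdd_mono_fun le (En J n) h \<and>
       (\<forall>x\<in>space (PiM (En J n) (\<lambda>_. borel)). \<bar>h x\<bar> \<le> Bg) \<and>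
       (\<integral>\<omega>. \<bar>g (subfam X J \<omega>) - h (subfam X (En J n) \<omega>)\<bar> \<partial>M) < \<eta>"
      using approx_fun[where X=X, OF P cl rf tr cJ XJ g Bg \<eta>] by blast
    define n where "n = max n1 n2"
    obtain h where h: "bdd_mono_fun le (En J n) h" "\<forall>x\<in>space (PiM (En J n) (\<lambda>_. borel)). \<bar>h x\<bar> \<le> Bf"
       "(\<integral>\<omega>. \<bar>f (subfam X J \<omega>) - h (subfam X (En J n) \<omega>)\<bar> \<partial>M) < \<eta>"
      using n1[of n] unfolding n_def by auto
    obtain k where k: "bdd_mono_fun le (En J n) k" "\<forall>x\<in>space (PiM (En J n) (\<lambda>_. borel)). \<bar>k x\<bar> \<le> Bg"
       "(\<integral>\<omega>. \<bar>g (subfam X J \<omega>) - k (subfam X (En J n) \<omega>)\<bar> \<partial>M) < \<eta>"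
      using n2[of n] unfolding n_def by auto
    define J0 where "J0 = En J n"
    have J0J: "J0 \<subseteq> J" unfolding J0_def by (rule En_sub)
    have K0: "finite J0 \<and> J0 \<subseteq> I"
      using J0J JI En_fin unfolding J0_def by auto
    have PA0: "pos_assoc M le X J0" using fin K0 by blast
    have ineq: "(\<integral>\<omega>. h (subfam X J0 \<omega>) \<partial>M) * (\<integral>\<omega>. k (subfam X J0 \<omega>) \<partial>M)
        \<le> (\<integral>\<omega>. h (subfam X J0 \<omega>) * k (subfam X J0 \<omega>) \<partial>M)"
    proof -
      have pre: "J0 \<subseteq> J0 \<and> bdd_mono_fun le J0 h \<and> bdd_mono_fun le J0 k"
        using h(1) k(1) unfolding J0_def by simp
      then show ?thesis using PA0 unfolding pos_assoc_def by blast
    qed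
    have hm: "h \<in> borel_measurable (PiM J0 (\<lambda>_. borel))" using h(1) unfolding bdd_mono_fun_def J0_def by blast
    have km: "k \<in> borel_measurable (PiM J0 (\<lambda>_. borel))" using k(1) unfolding bdd_mono_fun_def J0_def by blast
    have XJ0: "\<And>i. i \<in> J0 \<Longrightarrow> X i \<in> borel_measurable M" using XJ J0J by blast
    have c: "(\<integral>\<omega>. h (subfam X J0 \<omega>) * k (subfam X J0 \<omega>) \<partial>M) \<le>
          (\<integral>\<omega>. f (subfam X J \<omega>) * g (subfam X J \<omega>) \<partial>M) + (Bf+Bg)*\<eta>"
     and d: "(\<integral>\<omega>. f (subfam X J \<omega>) \<partial>M) * (\<integral>\<omega>. g (subfam X J \<omega>) \<partial>M) \<le>
          (\<integral>\<omega>. h (subfam X J0 \<omega>) \<partial>M) * (\<integral>\<omega>. k (subfam X J0 \<omega>) \<partial>M) + (Bf+Bg)*\<eta>"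
    proof -
      note cov = cov_approx[OF P, where H="\<lambda>\<omega>. f (subfam X J \<omega>)" and K="\<lambda>\<omega>. g (subfam X J \<omega>)"
          and F="\<lambda>\<omega>. h (subfam X J0 \<omega>)" and G="\<lambda>\<omega>. k (subfam X J0 \<omega>)" and a=Bf and b=Bg and \<eta>=\<eta>]
      have m1: "(\<lambda>\<omega>. f (subfam X J \<omega>)) \<in> borel_measurable M"
        using measurable_comp[OF subfam_meas[where X=X, OF XJ] fm] by (simp add: o_def)
      have m2: "(\<lambda>\<omega>. g (subfam X J \<omega>)) \<in> borel_measurable M"
        using measurable_comp[OF subfam_meas[where X=X, OF XJ] gm] by (simp add: o_def)
      have m3: "(\<lambda>\<omega>. h (subfam X J0 \<omega>)) \<in> borel_measurable M"
        using measurable_comp[OF subfam_meas[where X=X, OF XJ0] hm] by (simp add: o_def)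
      have m4: "(\<lambda>\<omega>. k (subfam X J0 \<omega>)) \<in> borel_measurable M"
        using measurable_comp[OF subfam_meas[where X=X, OF XJ0] km] by (simp add: o_def)
      have bd: "\<bar>h (subfam X J0 \<omega>)\<bar> \<le> Bf \<and> \<bar>f (subfam X J \<omega>)\<bar> \<le> Bf \<and>
          \<bar>k (subfam X J0 \<omega>)\<bar> \<le> Bg \<and> \<bar>g (subfam X J \<omega>)\<bar> \<le> Bg" for \<omega>
        using bspec[OF Bf(2) subfam_space[of X J \<omega>]] bspec[OF h(2) subfam_space[of X "En J n" \<omega>]]
          bspec[OF Bg(2) subfam_space[of X J \<omega>]] bspec[OF k(2) subfam_space[of X "En J n" \<omega>]]
        unfolding J0_def by blast
      have e1: "(\<integral>\<omega>. \<bar>h (subfam X J0 \<omega>) - f (subfam X J \<omega>)\<bar> \<partial>M) \<le> \<eta>"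
        using h(3) unfolding J0_def by (simp add: abs_minus_commute)
      have e2': "(\<integral>\<omega>. \<bar>k (subfam X J0 \<omega>) - g (subfam X J \<omega>)\<bar> \<partial>M) \<le> \<eta>"
        using k(3) unfolding J0_def by (simp add: abs_minus_commute)
      show "(\<integral>\<omega>. h (subfam X J0 \<omega>) * k (subfam X J0 \<omega>) \<partial>M) \<le>
          (\<integral>\<omega>. f (subfam X J \<omega>) * g (subfam X J \<omega>) \<partial>M) + (Bf+Bg)*\<eta>"
        using cov(1)[OF m3 m4 m1 m2 _ _ bd e1 e2'] Bf Bg by simp
      show "(\<integral>\<omega>. f (subfam X J \<omega>) \<partial>M) * (\<integral>\<omega>. g (subfam X J \<omega>) \<partial>M) \<le>
          (\<integral>\<omega>. h (subfam X J0 \<omega>) \<partial>M) * (\<integral>\<omega>. k (subfam X J0 \<omega>) \<partial>M) + (Bf+Bg)*\<eta>"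
        using cov(2)[OF m3 m4 m1 m2 _ _ bd e1 e2'] Bf Bg by simp
    qed
    show "(\<integral>\<omega>. f (subfam X J \<omega>) \<partial>M) * (\<integral>\<omega>. g (subfam X J \<omega>) \<partial>M)
          \<le> (\<integral>\<omega>. f (subfam X J \<omega>) * g (subfam X J \<omega>) \<partial>M) + e"
      using c d ineq e2 by linarith
  qed
qed

theorem theorem3p3:
  fixes M :: "'w measure" and le :: "'a::polish_space \<Rightarrow> 'a \<Rightarrow> bool"
    and X :: "'i \<Rightarrow> 'w \<Rightarrow> 'a" and I :: "'i set"
  assumes "prob_space M"
    and "pop_order le"
    and "countable I"
    and "\<And>i. i \<in> I \<Longrightarrow> X i \<in> measurable M borel"
  shows "((\<forall>J. finite J \<and> J \<subseteq> I \<longrightarrow> neg_assoc M le X J) \<longrightarrow> neg_assoc M le X I) \<and>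
         ((\<forall>J. finite J \<and> J \<subseteq> I \<longrightarrow> pos_assoc M le X J) \<longrightarrow> pos_assoc M le X I)"
proof (intro conjI impI)
  assume h: "\<forall>J. finite J \<and> J \<subseteq> I \<longrightarrow> neg_assoc M le X J"
  show "neg_assoc M le X I"
    by (rule NA_main[OF assms(1,2,3)]) (use assms(4) h in auto)
next
  assume h: "\<forall>J. finite J \<and> J \<subseteq> I \<longrightarrow> pos_assoc M le X J"
  show "pos_assoc M le X I"
    by (rule PA_main[OF assms(1,2,3)]) (use assms(4) h in auto)
qed

end
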